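(* Under the setting in the context, let $b\in\mathbb{R}^M$ be a least squares solution of the overdetermined system $Pb=c$. Then the residual $r=Pb-c$ satisfies \[|r|^2\le m\,C\sum_{\ell=1}^M h_\ell^2\,\mathcal{E}(h_\ell)^2\,\|\mathbf{u}\|^2_{\mathcal{N}(\Omega_\ell)},\] where $C$ is a constant independent of the $h_\ell$ and of $\mathbf{u}$.
   Context: Setting: $\Omega$ is a bounded open subset of $\mathcal{P}$, $\mathcal{P}=\mathbb{R}^2$ or a smooth orientable surface in $\mathbb{R}^3$ ($d=2$), with unit normal $\mathbf{n}$ ($\mathbf{n}=(0,0,1)$ for $\mathbb{R}^2$); $Q_{\mathbf{x}}\mathbf{v}=\mathbf{n}(\mathbf{x})\times\mathbf{v}$, surface curl $\mathbf{L}=Q_{\mathbf{x}}\nabla$. The div-free kernel is $\Phi_{\rm div}(\mathbf{x},\mathbf{y})=Q_{\mathbf{x}}(\nabla\nabla^T\phi(\|\mathbf{x}-\mathbf{y}\|))Q_{\mathbf{y}}$ for a positive definite radial $\phi$, with native space $\mathcal{N}(\cdot)$ continuously embedded in $\mathbf{H}^\tau(\Omega)$, $\tau>1$; $\mathbf{u}\in\mathcal{N}(\Omega)$ is a tangential div-free field. Patches $\Omega_1,\dots,\Omega_M\subset\Omega$ form an open cover of $\Omega$, each satisfying an interior cone condition with radius $R_\ell$ and angle $\theta$ independent of $\ell$; each patch intersects at most $m$ patches; $X_\ell=X\cap\Omega_\ell$ has mesh norm $h_\ell=\sup_{\mathbf{y}\in\Omega_\ell}\min_{\mathbf{x}\in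 X_\ell}\operatorname{dist}(\mathbf{x},\mathbf{y})$ with $h_\ell<QR_\ell$; $c\,h_\ell\le\operatorname{diam}(\Omega_\ell)\le Ch_\ell$ with $c,C$ independent of $\ell$, and $h_k$ and $h_\ell$ are comparable (uniformly) for overlapping patches. The local div-free interpolant $\mathbf{s}_\ell(\mathbf{x})=\sum_j\Phi_{\rm div}(\mathbf{x},\mathbf{x}_j)\mathbf{c}_j$ ($\mathbf{c}_j$ tangent at $\mathbf{x}_j\in X_\ell$, $\mathbf{s}_\ell=\mathbf{u}$ on $X_\ell$) has potential $\psi_\ell(\mathbf{x})=\sum_j\nabla^T\phi(\|\mathbf{x}-\mathbf{x}_j\|)Q_{\mathbf{x}_j}\mathbf{c}_j$, so $\mathbf{s}_\ell=\mathbf{L}(\psi_\ell)$. Local estimate (assumed): there are constants $Q=Q(\theta,\tau)$, $C$ with $\|\mathbf{u}-\mathbf{s}_\ell\|_{L_\infty(\Omega_\ell)}\le\mathcal{E}(h_\ell)\|\mathbf{u}\|_{\mathcal{N}(\Omega_\ell)}$ whenever $h_\ell<QR_\ell$, where $\mathcal{E}(h)=Ch^{\tau-d/2}$. Glue points: for each pair $\ell<k$ with $\Omega_\ell\cap\Omega_k\ne\emptyset$ a point $\bar{\mathbf{x}}_\ell^k\in\Omega_\ell\cap\Omega_k$ (the center of the overlap region); enumerate these as $\bar{\mathbf{x}}_1,\dots,\bar{\mathbf{x}}_L$. The system $Pb=c$: $P$ is the $L\times M$ matrix whose $i$-th row, for $\bar{\mathbf{x}}_i=\bar{\mathbf{x}}_\ell^k$,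 has $1$ in column $\ell$, $-1$ in column $k$ and zeros elsewhere, and $c_i=\psi_k(\bar{\mathbf{x}}_i)-\psi_\ell(\bar{\mathbf{x}}_i)$; $|\cdot|$ is the Euclidean norm. *)

theory Defs
  imports "HOL-Analysis.Analysis" "HOL-Analysis.Cross3"
begin

unbundle no cross3_syntax

type_synonym pt = "real^3"

text \<open>The planar case R^2 is
  P = {x. x$3 = 0} with constant normal (0,0,1).\<close>
definition smooth_oriented_surface :: "pt set \<Rightarrow> (pt \<Rightarrow> pt) \<Rightarrow> bool" where
  "smooth_oriented_surface P n \<longleftrightarrow>
     continuous_on P n \<and> (\<forall>x\<in>P. norm (n x) = 1) \<and>
     (\<forall>x\<in>P. \<exists>U F G. open U \<and> x \<in> U \<and> continuous_on U G \<and>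
        (\<forall>y\<in>U. (F has_derivative (\<lambda>v. G y \<bullet> v)) (at y) \<and> G y \<noteq> 0) \<and>
        P \<inter> U = {y\<in>U. F y = 0} \<and>
        (\<forall>y\<in>P \<inter> U. n y = G y /\<^sub>R norm (G y)))"

definition tangential_gradient :: "pt set \<Rightarrow> (pt \<Rightarrow> pt) \<Rightarrow> (pt \<Rightarrow> real) \<Rightarrow> (pt \<Rightarrow> pt) \<Rightarrow> bool" where
  "tangential_gradient S n f g \<longleftrightarrow>
     (\<forall>x\<in>S. g x \<bullet> n x = 0 \<and> (f has_derivative (\<lambda>v. g x \<bullet> v)) (at x within S))"

definition surface_curl_of :: "pt set \<Rightarrow> (pt \<Rightarrow> pt) \<Rightarrow> (pt \<Rightarrow> real) \<Rightarrow> (pt \<Rightarrow> pt) \<Rightarrow> bool" where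
  "surface_curl_of S n f U \<longleftrightarrow>
     (\<exists>g. tangential_gradient S n f g \<and> (\<forall>x\<in>S. U x = cross3 (n x) (g x)))"

definition path_len :: "(real \<Rightarrow> pt) \<Rightarrow> real" where
  "path_len \<gamma> = integral {0..1} (\<lambda>t. norm (vector_derivative \<gamma> (at t)))"

definition C1_path_in :: "pt set \<Rightarrow> (real \<Rightarrow> pt) \<Rightarrow> pt \<Rightarrow> pt \<Rightarrow> bool" where
  "C1_path_in S \<gamma> x y \<longleftrightarrow> \<gamma> C1_differentiable_on {0..1} \<and> \<gamma> ` {0..1} \<subseteq> S \<and> \<gamma> 0 = x \<and> \<gamma> 1 = y"

definition intrinsic_dist :: "pt set \<Rightarrow> pt \<Rightarrow> pt \<Rightarrow> ereal" where
  "intrinsic_dist S x y = Inf {ereal (path_len \<gamma>) | \<gamma>. C1_path_in S \<gamma> x y}"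

definition intrinsic_diam :: "pt set \<Rightarrow> ereal" where
  "intrinsic_diam S = Sup {intrinsic_dist S x y | x y. x \<in> S \<and> y \<in> S}"

definition mesh_norm :: "pt set \<Rightarrow> pt set \<Rightarrow> real" where
  "mesh_norm X S = (SUP y\<in>S. infdist y (X \<inter> S))"

text \<open>Error function E(h) = C h^(tau - d/2), d = 2.\<close>
definition Err :: "real \<Rightarrow> real \<Rightarrow> real \<Rightarrow> real" where
  "Err CE \<tau> h = CE * h powr (\<tau> - 1)"

text \<open>Rows of P: pairs (l,k), l<k<M, of overlapping patches (patches indexed 0..M-1).\<close>
definition glue_pairs :: "nat \<Rightarrow> (nat \<Rightarrow> pt set) \<Rightarrow> (nat \<times> nat) set" where
  "glue_pairs M \<Omega>s = {(l,k). l < k \<and> k < M \<and> \<Omega>s l \<inter> \<Omega>s k \<noteq> {}}"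

text \<open>|P b - c|^2, with (Pb)_i = b_l - b_k and c_i = psi_k(xbar_i) - psi_l(xbar_i).\<close>
definition residual_sq :: "nat \<Rightarrow> (nat \<Rightarrow> pt set) \<Rightarrow> (nat \<Rightarrow> nat \<Rightarrow> pt) \<Rightarrow> (nat \<Rightarrow> pt \<Rightarrow> real)
    \<Rightarrow> (nat \<Rightarrow> real) \<Rightarrow> real" where
  "residual_sq M \<Omega>s xbar \<psi>s b =
     (\<Sum>(l,k)\<in>glue_pairs M \<Omega>s. (b l - b k - (\<psi>s k (xbar l k) - \<psi>s l (xbar l k)))\<^sup>2)"

definition least_squares_solution :: "nat \<Rightarrow> (nat \<Rightarrow> pt set) \<Rightarrow> (nat \<Rightarrow> nat \<Rightarrow> pt) \<Rightarrow> (nat \<Rightarrow> pt \<Rightarrow> real)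
    \<Rightarrow> (nat \<Rightarrow> real) \<Rightarrow> bool" where
  "least_squares_solution M \<Omega>s xbar \<psi>s b \<longleftrightarrow>
     (\<forall>b'. residual_sq M \<Omega>s xbar \<psi>s b \<le> residual_sq M \<Omega>s xbar \<psi>s b')"

end

theory Submission
  imports Defs
begin

lemma path_bound:
  fixes f :: "pt \<Rightarrow> real" and g :: "pt \<Rightarrow> pt"
  assumes der: "\<And>x. x \<in> S \<Longrightarrow> (f has_derivative (\<lambda>v. g x \<bullet> v)) (at x within S)"
    and gb: "\<And>x. x \<in> S \<Longrightarrow> norm (g x) \<le> L"
    and p: "C1_path_in S \<gamma> x y"
  shows "\<bar>f y - f x\<bar> \<le> L * path_len \<gamma>"
proof -
  from p obtain D where D: "\<And>t. t \<in> {0..1} \<Longrightarrow> (\<gamma> has_vector_derivative D t) (at t)"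
    and Dc: "continuous_on {0..1} D" and im: "\<gamma> ` {0..1} \<subseteq> S" and e: "\<gamma> 0 = x" "\<gamma> 1 = y"
    unfolding C1_path_in_def C1_differentiable_on_def by blast
  have vd: "vector_derivative \<gamma> (at t) = D t" if "t \<in> {0..1}" for t
    using D[OF that] vector_derivative_at by blast
  have hd: "((f \<circ> \<gamma>) has_vector_derivative (g (\<gamma> t) \<bullet> D t)) (at t within {0..1})"
    if t: "t \<in> {0..1}" for t
  proof -
    have g1: "(\<gamma> has_derivative (\<lambda>s. s *\<^sub>R D t)) (at t within {0..1})"
      using D[OF t] has_vector_derivative_def has_derivative_at_withinI by blast
    have f1: "(f has_derivative (\<lambda>v. g (\<gamma> t) \<bullet> v)) (at (\<gamma> t) within \<gamma> ` {0..1})"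
      using der[of "\<gamma> t"] im t has_derivative_subset by blast
    have "((f \<circ> \<gamma>) has_derivative ((\<lambda>v. g (\<gamma> t) \<bullet> v) \<circ> (\<lambda>s. s *\<^sub>R D t))) (at t within {0..1})"
      by (rule diff_chain_within[OF g1 f1])
    then show ?thesis unfolding has_vector_derivative_def
      by (simp add: o_def inner_scaleR_right mult.commute)
  qed
  have I: "((\<lambda>t. g (\<gamma> t) \<bullet> D t) has_integral ((f \<circ> \<gamma>) 1 - (f \<circ> \<gamma>) 0)) {0..1}"
    using fundamental_theorem_of_calculus[of "0::real" 1 "f \<circ> \<gamma>" "\<lambda>t::real. g (\<gamma> t) \<bullet> D t"] hd by (simp add: atLeastAtMost_iff)
  have intn: "(\<lambda>t::real. L * norm (D t)) integrable_on {0..1}"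
    by (intro integrable_continuous_interval continuous_intros Dc)
  have "norm (integral {0..1} (\<lambda>t::real. g (\<gamma> t) \<bullet> D t)) \<le> integral {0..1} (\<lambda>t::real. L * norm (D t))"
  proof (rule integral_norm_bound_integral)
    show "(\<lambda>t::real. g (\<gamma> t) \<bullet> D t) integrable_on {0..1}" using I by blast
    show "(\<lambda>t::real. L * norm (D t)) integrable_on {0..1}" by (rule intn)
    fix t :: real assume t: "t \<in> {0..1}"
    have c1: "norm (g (\<gamma> t) \<bullet> D t) \<le> norm (g (\<gamma> t)) * norm (D t)"
      using norm_cauchy_schwarz by (simp add: Cauchy_Schwarz_ineq2)
    have "\<gamma> t \<in> S" using im t by auto
    then have "norm (g (\<gamma> t)) \<le> L" by (rule gb)
    then have "norm (g (\<gamma> t)) * norm (D t) \<le> L * norm (D t)" by (rule mult_right_mono) simp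
    with c1 show "norm (g (\<gamma> t) \<bullet> D t) \<le> L * norm (D t)" by linarith
  qed
  moreover have "integral {0..1} (\<lambda>t::real. g (\<gamma> t) \<bullet> D t) = f y - f x"
    using I e by (simp add: integral_unique)
  moreover have "integral {0..1} (\<lambda>t::real. L * norm (D t)) = L * path_len \<gamma>"
  proof -
    have "integral {0..1} (\<lambda>t::real. L * norm (D t)) = integral {0..1} (\<lambda>t. L * norm (vector_derivative \<gamma> (at t)))"
      by (rule integral_cong) (simp only: vd)
    also have "\<dots> = L * path_len \<gamma>" unfolding path_len_def by (rule integral_mult_right)
    finally show ?thesis .
  qed
  ultimately show ?thesis by (metis real_norm_def)
qed


lemma diam_bound:
  fixes f :: "pt \<Rightarrow> real" and g :: "pt \<Rightarrow> pt"
  assumes der: "\<And>x. x \<in> S \<Longrightarrow> (f has_derivative (\<lambda>v. g x \<bullet> v)) (at x within S)"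
    and gb: "\<And>x. x \<in> S \<Longrightarrow> norm (g x) \<le> L"
    and L: "L \<ge> 0" and xy: "x \<in> S" "y \<in> S" and dm: "intrinsic_diam S \<le> ereal Dm"
  shows "\<bar>f y - f x\<bar> \<le> L * Dm"
proof -
  have "intrinsic_dist S x y \<le> intrinsic_diam S"
    unfolding intrinsic_diam_def by (rule Sup_upper) (use xy in blast)
  with dm have le: "intrinsic_dist S x y \<le> ereal Dm" by order
  have key: "\<bar>f y - f x\<bar> \<le> L * (Dm + e)" if e: "e > 0" for e
  proof -
    have "Inf {ereal (path_len \<gamma>) | \<gamma>. C1_path_in S \<gamma> x y} < ereal (Dm + e)"
      using le e unfolding intrinsic_dist_def by (simp add: order_le_less_trans)
    then obtain z where "z \<in> {ereal (path_len \<gamma>) | \<gamma>. C1_path_in S \<gamma> x y}" "z < ereal (Dm + e)"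
      by (auto simp: Inf_less_iff)
    then obtain \<gamma> where p: "C1_path_in S \<gamma> x y" and lt: "path_len \<gamma> < Dm + e" by auto
    have "\<bar>f y - f x\<bar> \<le> L * path_len \<gamma>" by (rule path_bound[OF der gb p])
    also have "\<dots> \<le> L * (Dm + e)" using lt L by (intro mult_left_mono) auto
    finally show ?thesis .
  qed
  show ?thesis
  proof (rule field_le_epsilon)
    fix e :: real assume e: "e > 0"
    have "\<bar>f y - f x\<bar> \<le> L * (Dm + e / (L + 1))" using key[of "e / (L+1)"] e L by simp
    also have "L * (e / (L + 1)) \<le> e" using e L by (simp add: field_simps)
    then have "L * (Dm + e / (L + 1)) \<le> L * Dm + e" by (simp add: distrib_left)
    finally show "\<bar>f y - f x\<bar> \<le> L * Dm + e" .
  qed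
qed

lemma comb:
  fixes w :: "nat \<Rightarrow> real"
  assumes w: "\<forall>l<M. w l \<ge> 0"
    and cm: "\<forall>l<M. card {k. k < M \<and> k \<noteq> l \<and> \<Omega>s l \<inter> \<Omega>s k \<noteq> {}} \<le> m"
  shows "(\<Sum>(l,k)\<in>glue_pairs M \<Omega>s. w l + w k) \<le> 2 * real m * (\<Sum>l<M. w l)"
proof -
  define N where "N l = {k. k < M \<and> k \<noteq> l \<and> \<Omega>s l \<inter> \<Omega>s k \<noteq> {}}" for l
  define Sg where "Sg = (SIGMA l:{..<M}. N l)"
  let ?G = "glue_pairs M \<Omega>s"
  have finN: "finite (N l)" for l unfolding N_def by auto
  have finSg: "finite Sg" unfolding Sg_def using finN by auto
  have GS: "?G \<subseteq> Sg" unfolding Sg_def N_def glue_pairs_def by auto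
  have GS2: "prod.swap ` ?G \<subseteq> Sg" unfolding Sg_def N_def glue_pairs_def by auto
  have Sgb: "(\<Sum>p\<in>Sg. w (fst p)) \<le> real m * (\<Sum>l<M. w l)"
  proof -
    have "(\<Sum>p\<in>Sg. w (fst p)) = (\<Sum>l<M. \<Sum>k\<in>N l. w l)"
    proof -
      have "(\<Sum>l<M. \<Sum>k\<in>N l. w l) = (\<Sum>(l,k)\<in>Sigma {..<M} N. w l)"
        by (rule sum.Sigma) (auto simp: finN)
      then show ?thesis unfolding Sg_def by (simp add: split_def)
    qed
    also have "\<dots> = (\<Sum>l<M. real (card (N l)) * w l)" by simp
    also have "\<dots> \<le> (\<Sum>l<M. real m * w l)"
      by (intro sum_mono mult_right_mono) (use w cm in \<open>auto simp: N_def\<close>)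
    finally show ?thesis by (simp add: sum_distrib_left)
  qed
  have nn: "\<forall>p\<in>Sg. w (fst p) \<ge> 0" unfolding Sg_def using w by auto
  have s1: "(\<Sum>p\<in>?G. w (fst p)) \<le> (\<Sum>p\<in>Sg. w (fst p))"
    by (rule sum_mono2[OF finSg GS]) (use nn in auto)
  have "(\<Sum>p\<in>?G. w (snd p)) = (\<Sum>p\<in>prod.swap ` ?G. w (fst p))"
    by (subst sum.reindex) auto
  also have "\<dots> \<le> (\<Sum>p\<in>Sg. w (fst p))"
    by (rule sum_mono2[OF finSg GS2]) (use nn in auto)
  finally have s2: "(\<Sum>p\<in>?G. w (snd p)) \<le> (\<Sum>p\<in>Sg. w (fst p))" .
  have "(\<Sum>(l,k)\<in>?G. w l + w k) = (\<Sum>p\<in>?G. w (fst p)) + (\<Sum>p\<in>?G. w (snd p))"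
    by (simp add: case_prod_beta sum.distrib)
  with s1 s2 Sgb show ?thesis by linarith
qed

lemma norm_cross_orth:
  fixes a w :: pt
  assumes "norm a = 1" "a \<bullet> w = 0"
  shows "norm (cross3 a w) = norm w"
proof -
  have "(norm (cross3 a w))\<^sup>2 = (norm w)\<^sup>2" using norm_cross_dot[of a w] assms by simp
  then show ?thesis by (simp add: power2_eq_iff_nonneg)
qed

lemma cross_diff: "cross3 a b - cross3 a c = cross3 a (b - c)" for a b c :: pt
  by (simp add: cross3_simps)

theorem proposition4p4:
  fixes P :: "pt set" and n :: "pt \<Rightarrow> pt" and \<Omega> :: "pt set"
    and \<tau> CE cl Cd Ccomp :: real
  assumes "smooth_oriented_surface P n" and "\<Omega> \<subseteq> P" and "openin (top_of_set P) \<Omega>"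
    and "bounded \<Omega>" and "\<tau> > 1" and "CE > 0" and "cl > 0" and "Cd > 0" and "Ccomp \<ge> 1"
  shows "\<exists>C>0. \<forall>(M::nat) (m::nat) (\<Omega>s::nat \<Rightarrow> pt set) (X::pt set) (h::nat \<Rightarrow> real)
      (\<psi>::pt \<Rightarrow> real) (\<psi>s::nat \<Rightarrow> pt \<Rightarrow> real) (u::pt \<Rightarrow> pt) (s::nat \<Rightarrow> pt \<Rightarrow> pt)
      (nu::nat \<Rightarrow> real) (xbar::nat \<Rightarrow> nat \<Rightarrow> pt) (b::nat \<Rightarrow> real).
      \<Omega> = (\<Union>l<M. \<Omega>s l) \<longrightarrow>
      (\<forall>l<M. openin (top_of_set P) (\<Omega>s l) \<and> \<Omega>s l \<noteq> {}) \<longrightarrow>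
      (\<forall>l<M. card {k. k < M \<and> k \<noteq> l \<and> \<Omega>s l \<inter> \<Omega>s k \<noteq> {}} \<le> m) \<longrightarrow>
      finite X \<longrightarrow>
      (\<forall>l<M. 0 < h l \<and> h l = mesh_norm X (\<Omega>s l)) \<longrightarrow>
      (\<forall>l<M. ereal (cl * h l) \<le> intrinsic_diam (\<Omega>s l) \<and> intrinsic_diam (\<Omega>s l) \<le> ereal (Cd * h l)) \<longrightarrow>
      (\<forall>l<M. \<forall>k<M. \<Omega>s l \<inter> \<Omega>s k \<noteq> {} \<longrightarrow> h k \<le> Ccomp * h l) \<longrightarrow>
      surface_curl_of \<Omega> n \<psi> u \<longrightarrow>
      (\<forall>l<M. surface_curl_of (\<Omega>s l) n (\<psi>s l) (s l) \<and> (\<forall>x\<in>X \<inter> \<Omega>s l. s l x = u x)) \<longrightarrow>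
      (\<forall>l<M. 0 \<le> nu l \<and> (\<forall>x\<in>\<Omega>s l. norm (u x - s l x) \<le> Err CE \<tau> (h l) * nu l)) \<longrightarrow>
      (\<forall>(l,k)\<in>glue_pairs M \<Omega>s. xbar l k \<in> \<Omega>s l \<inter> \<Omega>s k) \<longrightarrow>
      least_squares_solution M \<Omega>s xbar \<psi>s b \<longrightarrow>
      residual_sq M \<Omega>s xbar \<psi>s b
        \<le> real m * C * (\<Sum>l<M. (h l)\<^sup>2 * (Err CE \<tau> (h l))\<^sup>2 * (nu l)\<^sup>2)"
proof (intro exI[of _ "4 * Cd\<^sup>2"] conjI allI impI)
  show "0 < 4 * Cd\<^sup>2" using assms by simp
  fix M m :: nat and \<Omega>s :: "nat \<Rightarrow> pt set" and X :: "pt set" and h :: "nat \<Rightarrow> real"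
    and \<psi> :: "pt \<Rightarrow> real" and \<psi>s :: "nat \<Rightarrow> pt \<Rightarrow> real" and u :: "pt \<Rightarrow> pt" and s :: "nat \<Rightarrow> pt \<Rightarrow> pt"
    and nu :: "nat \<Rightarrow> real" and xbar :: "nat \<Rightarrow> nat \<Rightarrow> pt" and b :: "nat \<Rightarrow> real"
  assume cov: "\<Omega> = (\<Union>l<M. \<Omega>s l)"
    and op: "\<forall>l<M. openin (top_of_set P) (\<Omega>s l) \<and> \<Omega>s l \<noteq> {}"
    and cm: "\<forall>l<M. card {k. k < M \<and> k \<noteq> l \<and> \<Omega>s l \<inter> \<Omega>s k \<noteq> {}} \<le> m"
    and "finite X"
    and hpos: "\<forall>l<M. 0 < h l \<and> h l = mesh_norm X (\<Omega>s l)"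
    and diam: "\<forall>l<M. ereal (cl * h l) \<le> intrinsic_diam (\<Omega>s l) \<and> intrinsic_diam (\<Omega>s l) \<le> ereal (Cd * h l)"
    and "\<forall>l<M. \<forall>k<M. \<Omega>s l \<inter> \<Omega>s k \<noteq> {} \<longrightarrow> h k \<le> Ccomp * h l"
    and cu: "surface_curl_of \<Omega> n \<psi> u"
    and cs: "\<forall>l<M. surface_curl_of (\<Omega>s l) n (\<psi>s l) (s l) \<and> (\<forall>x\<in>X \<inter> \<Omega>s l. s l x = u x)"
    and err: "\<forall>l<M. 0 \<le> nu l \<and> (\<forall>x\<in>\<Omega>s l. norm (u x - s l x) \<le> Err CE \<tau> (h l) * nu l)"
    and xb: "\<forall>(l,k)\<in>glue_pairs M \<Omega>s. xbar l k \<in> \<Omega>s l \<inter> \<Omega>s k"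
    and ls: "least_squares_solution M \<Omega>s xbar \<psi>s b"
  let ?G = "glue_pairs M \<Omega>s"
  define E where "E l = Err CE \<tau> (h l)" for l
  define B where "B l = Cd * h l * E l * nu l" for l
  have Epos: "E l > 0" if "l < M" for l
  proof -
    have "h l > 0" using hpos that by blast
    then show ?thesis using assms unfolding E_def Err_def by simp
  qed
  have Bnn: "B l \<ge> 0" if "l < M" for l
  proof -
    have "h l > 0" "nu l \<ge> 0" using hpos err that by auto
    then show ?thesis using Epos[OF that] assms unfolding B_def by simp
  qed
  from cu obtain g where tg: "tangential_gradient \<Omega> n \<psi> g" and ug: "\<forall>x\<in>\<Omega>. u x = cross3 (n x) (g x)"
    unfolding surface_curl_of_def by blast
  have "\<forall>l<M. \<exists>G. tangential_gradient (\<Omega>s l) n (\<psi>s l) G \<and> (\<forall>x\<in>\<Omega>s l. s l x = cross3 (n x) (G x))"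
    using cs unfolding surface_curl_of_def by blast
  then obtain Gs where Gs: "\<And>l. l < M \<Longrightarrow> tangential_gradient (\<Omega>s l) n (\<psi>s l) (Gs l) \<and>
      (\<forall>x\<in>\<Omega>s l. s l x = cross3 (n x) (Gs l x))"
    by metis
  have sub: "\<Omega>s l \<subseteq> \<Omega>" if "l < M" for l using cov that by blast
  have nP: "\<And>x. x \<in> P \<Longrightarrow> norm (n x) = 1" using assms(1) unfolding smooth_oriented_surface_def by blast
  define F where "F l x = \<psi> x - \<psi>s l x" for l x
  have Fder: "(F l has_derivative (\<lambda>v. (g x - Gs l x) \<bullet> v)) (at x within \<Omega>s l)"
    if l: "l < M" and x: "x \<in> \<Omega>s l" for l x
  proof -
    have a: "(\<psi> has_derivative (\<lambda>v. g x \<bullet> v)) (at x within \<Omega>s l)"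
      using tg sub[OF l] x has_derivative_subset unfolding tangential_gradient_def by blast
    have c: "(\<psi>s l has_derivative (\<lambda>v. Gs l x \<bullet> v)) (at x within \<Omega>s l)"
      using Gs[OF l] x unfolding tangential_gradient_def by blast
    show ?thesis using has_derivative_diff[OF a c] unfolding F_def by (simp add: inner_diff_left)
  qed
  have Fgb: "norm (g x - Gs l x) \<le> E l * nu l" if l: "l < M" and x: "x \<in> \<Omega>s l" for l x
  proof -
    have xO: "x \<in> \<Omega>" using sub[OF l] x by blast
    have n1: "norm (n x) = 1" using nP xO assms(2) by blast
    have o1: "n x \<bullet> g x = 0" using tg xO unfolding tangential_gradient_def by (simp add: inner_commute)
    have o2: "n x \<bullet> Gs l x = 0" using Gs[OF l] x unfolding tangential_gradient_def by (simp add: inner_commute)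
    have "u x - s l x = cross3 (n x) (g x - Gs l x)"
      using ug xO Gs[OF l] x by (simp add: cross_diff)
    then have "norm (u x - s l x) = norm (g x - Gs l x)"
      using norm_cross_orth[OF n1] o1 o2 by (simp add: inner_diff_right)
    moreover have "norm (u x - s l x) \<le> Err CE \<tau> (h l) * nu l" using err l x by blast
    ultimately show ?thesis unfolding E_def by linarith
  qed
  have Fb: "\<bar>F l y - F l x\<bar> \<le> B l" if l: "l < M" and x: "x \<in> \<Omega>s l" and y: "y \<in> \<Omega>s l" for l x y
  proof -
    have "\<bar>F l y - F l x\<bar> \<le> (E l * nu l) * (Cd * h l)"
    proof (rule diam_bound[where S="\<Omega>s l" and g="\<lambda>x. g x - Gs l x"])
      show "\<And>x. x \<in> \<Omega>s l \<Longrightarrow> (F l has_derivative (\<lambda>v. (g x - Gs l x) \<bullet> v)) (at x within \<Omega>s l)"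
        using Fder[OF l] by blast
      show "\<And>x. x \<in> \<Omega>s l \<Longrightarrow> norm (g x - Gs l x) \<le> E l * nu l" using Fgb[OF l] by blast
      show "0 \<le> E l * nu l" using Epos[OF l] err l by simp
      show "intrinsic_diam (\<Omega>s l) \<le> ereal (Cd * h l)" using diam l by blast
    qed (use x y in auto)
    then show ?thesis unfolding B_def by (simp add: mult_ac)
  qed
  define z where "z l = (SOME x. x \<in> \<Omega>s l)" for l
  have zin: "z l \<in> \<Omega>s l" if "l < M" for l
    using op that unfolding z_def by (simp add: some_in_eq)
  define b' where "b' l = F l (z l)" for l
  have termb: "(b' l - b' k - (\<psi>s k (xbar l k) - \<psi>s l (xbar l k)))\<^sup>2 \<le> 2 * (B l)\<^sup>2 + 2 * (B k)\<^sup>2"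
    if p: "(l,k) \<in> ?G" for l k
  proof -
    have lk: "l < M" "k < M" using p unfolding glue_pairs_def by auto
    have xl: "xbar l k \<in> \<Omega>s l" and xk: "xbar l k \<in> \<Omega>s k" using xb p by auto
    define a where "a = F l (z l) - F l (xbar l k)"
    define c where "c = F k (z k) - F k (xbar l k)"
    have eq: "b' l - b' k - (\<psi>s k (xbar l k) - \<psi>s l (xbar l k)) = a - c"
      unfolding a_def c_def b'_def F_def by simp
    have ha: "\<bar>a\<bar> \<le> B l" unfolding a_def using Fb[OF lk(1) xl zin[OF lk(1)]] .
    have hc: "\<bar>c\<bar> \<le> B k" unfolding c_def using Fb[OF lk(2) xk zin[OF lk(2)]] .
    have "2 * a\<^sup>2 + 2 * c\<^sup>2 - (a - c)\<^sup>2 = (a + c)\<^sup>2" by (simp add: power2_eq_square algebra_simps)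
    then have "(a - c)\<^sup>2 \<le> 2 * a\<^sup>2 + 2 * c\<^sup>2" using zero_le_power2[of "a + c"] by linarith
    moreover have "a\<^sup>2 \<le> (B l)\<^sup>2" using ha by (metis abs_ge_zero power2_abs power_mono)
    have "c\<^sup>2 \<le> (B k)\<^sup>2" using hc by (metis abs_ge_zero power2_abs power_mono)
    ultimately show ?thesis unfolding eq using \<open>a\<^sup>2 \<le> (B l)\<^sup>2\<close> by linarith
  qed
  have "residual_sq M \<Omega>s xbar \<psi>s b \<le> residual_sq M \<Omega>s xbar \<psi>s b'"
    using ls unfolding least_squares_solution_def by blast
  also have "\<dots> \<le> (\<Sum>(l,k)\<in>?G. 2 * (B l)\<^sup>2 + 2 * (B k)\<^sup>2)"
    unfolding residual_sq_def by (rule sum_mono) (use termb in auto)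
  also have "\<dots> = 2 * (\<Sum>(l,k)\<in>?G. (B l)\<^sup>2 + (B k)\<^sup>2)"
    by (simp add: sum_distrib_left case_prod_beta algebra_simps)
  also have "\<dots> \<le> 2 * (2 * real m * (\<Sum>l<M. (B l)\<^sup>2))"
    using comb[of M "\<lambda>l. (B l)\<^sup>2" \<Omega>s m] cm by simp
  also have "(\<Sum>l<M. (B l)\<^sup>2) = Cd\<^sup>2 * (\<Sum>l<M. (h l)\<^sup>2 * (Err CE \<tau> (h l))\<^sup>2 * (nu l)\<^sup>2)"
    unfolding B_def E_def by (simp add: sum_distrib_left power_mult_distrib mult_ac)
  finally show "residual_sq M \<Omega>s xbar \<psi>s b
        \<le> real m * (4 * Cd\<^sup>2) * (\<Sum>l<M. (h l)\<^sup>2 * (Err CE \<tau> (h l))\<^sup>2 * (nu l)\<^sup>2)"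
    by (simp add: mult_ac)
qed

end
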